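(* Let $|\Psi^{RQ}\rangle$ be a pure state on $\mathcal{H}_R\otimes\mathcal{H}_Q$, with $d=\dim\mathcal{H}_Q$, and let a noisy channel (CPTP map) $\mathcal{E}^Q$ from $Q$ to $Q$ act on $Q$, realized by a unitary $U^{QE}$ acting on $Q$ and an environment $E$ initially in a pure state $|E\rangle$, producing the pure state $\rho^{RQ'E'}$. Let Alice encode classical information in an ensemble $\{p_k,\rho_k^Q\}$ with $\sum_k p_k\rho_k^Q=\rho^Q=\mathrm{Tr}_R|\Psi^{RQ}\rangle\langle\Psi^{RQ}|$, and let $H_{Eve}$ be the classical information Eve obtains, which satisfies $H_{Eve}\le\chi^{E'}$. Then $$I_c(A\rangle B)+H_{Eve}\le \log d .$$
   Context: Notation: $S$ is von Neumann entropy. Bob receives $\rho_k^{Q'}=\mathcal{E}^Q(\rho_k^Q)$ and $\rho^{Q'}=\mathcal{E}^Q(\rho^Q)$; Eve (the environment) holds $\rho_k^{E'}$, $\rho^{E'}$, the corresponding reduced states of the environment after the unitary interaction. Holevo quantities: $\chi^{Q'}=S(\rho^{Q'})-\sum_k p_kS(\rho_k^{Q'})$ and $\chi^{E'}=S(\rho^{E'})-\sum_kp_kS(\rho_k^{E'})$. The coherent information is $I_c(A\rangle B)=I_c(R\rangle Q')=S(\rho^{Q'})-S(\rho^{RQ'})$, where $\rho^{RQ'}=(I^R\otimes\mathcal{E}^Q)(|\Psi^{RQ}\rangle\langle\Psi^{RQ}|)$. Standing convention of the framework (Schumacher–Westmoreland): the coherent information is identified with the difference of Holevo quantities, $I_c(A\rangle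 B)=\chi^{Q'}-\chi^{E'}$. *)

theory Defs
  imports "Jordan_Normal_Form.Matrix" "Jordan_Normal_Form.Char_Poly"
begin

definition adj :: "complex mat \<Rightarrow> complex mat" where
  "adj M = mat (dim_col M) (dim_row M) (\<lambda>(i,j). cnj (M $$ (j,i)))"

definition unitary_mat :: "nat \<Rightarrow> complex mat \<Rightarrow> bool" where
  "unitary_mat n U \<longleftrightarrow> U \<in> carrier_mat n n \<and> adj U * U = 1\<^sub>m n \<and> U * adj U = 1\<^sub>m n"

definition pure_vec :: "nat \<Rightarrow> complex vec \<Rightarrow> bool" where
  "pure_vec n v \<longleftrightarrow> v \<in> carrier_vec n \<and> (\<Sum>i<n. (cmod (v $ i))\<^sup>2) = 1"

definition ket_bra :: "complex vec \<Rightarrow> complex mat" where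
  "ket_bra v = mat (dim_vec v) (dim_vec v) (\<lambda>(i,j). v $ i * cnj (v $ j))"

definition mtrace :: "complex mat \<Rightarrow> complex" where
  "mtrace M = (\<Sum>i<dim_row M. M $$ (i,i))"

definition density_mat :: "nat \<Rightarrow> complex mat \<Rightarrow> bool" where
  "density_mat n \<rho> \<longleftrightarrow> \<rho> \<in> carrier_mat n n \<and> adj \<rho> = \<rho> \<and>
     (\<forall>v \<in> carrier_vec n. 0 \<le> Re (conjugate v \<bullet> (\<rho> *\<^sub>v v))) \<and> mtrace \<rho> = 1"

text \<open>Kronecker (tensor) product; index (i,k) of the product space is i * dim B + k.\<close>
definition kron :: "complex mat \<Rightarrow> complex mat \<Rightarrow> complex mat" where
  "kron A B = mat (dim_row A * dim_row B) (dim_col A * dim_col B)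
     (\<lambda>(i,j). A $$ (i div dim_row B, j div dim_col B) * B $$ (i mod dim_row B, j mod dim_col B))"

text \<open>Partial traces on C^a \<otimes> C^b: trace out the first (dim a) resp. second (dim b) factor.\<close>
definition ptrace_first :: "nat \<Rightarrow> nat \<Rightarrow> complex mat \<Rightarrow> complex mat" where
  "ptrace_first a b M = mat b b (\<lambda>(i,j). \<Sum>k<a. M $$ (k * b + i, k * b + j))"

definition ptrace_second :: "nat \<Rightarrow> nat \<Rightarrow> complex mat \<Rightarrow> complex mat" where
  "ptrace_second a b M = mat a a (\<lambda>(i,j). \<Sum>k<b. M $$ (i * b + k, j * b + k))"

definition eta :: "real \<Rightarrow> real" where
  "eta x = (if x \<le> 0 then 0 else - x * log 2 x)"

text \<open>S(rho) = - sum over eigenvalues (with multiplicity) of lambda log lambda;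
  the eigenvalues are the roots of the characteristic polynomial.\<close>
definition vN_entropy :: "complex mat \<Rightarrow> real" where
  "vN_entropy \<rho> = (\<Sum>a \<in> {a. poly (char_poly \<rho>) a = 0}.
      of_nat (order a (char_poly \<rho>)) * eta (Re a))"

definition dilate :: "nat \<Rightarrow> nat \<Rightarrow> complex mat \<Rightarrow> complex vec \<Rightarrow> complex mat \<Rightarrow> complex mat" where
  "dilate d dE U e \<rho> = U * kron \<rho> (ket_bra e) * adj U"

definition chan_out :: "nat \<Rightarrow> nat \<Rightarrow> complex mat \<Rightarrow> complex vec \<Rightarrow> complex mat \<Rightarrow> complex mat" where
  "chan_out d dE U e \<rho> = ptrace_second d dE (dilate d dE U e \<rho>)"

definition env_out :: "nat \<Rightarrow> nat \<Rightarrow> complex mat \<Rightarrow> complex vec \<Rightarrow> complex mat \<Rightarrow> complex mat" where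
  "env_out d dE U e \<rho> = ptrace_first d dE (dilate d dE U e \<rho>)"

definition ens_avg :: "nat \<Rightarrow> nat \<Rightarrow> (nat \<Rightarrow> real) \<Rightarrow> (nat \<Rightarrow> complex mat) \<Rightarrow> complex mat" where
  "ens_avg d n p \<rho> = mat d d (\<lambda>(i,j). \<Sum>k<n. complex_of_real (p k) * \<rho> k $$ (i,j))"

definition holevo :: "nat \<Rightarrow> (nat \<Rightarrow> real) \<Rightarrow> (nat \<Rightarrow> complex mat) \<Rightarrow> complex mat \<Rightarrow> real" where
  "holevo n p \<sigma> avg = vN_entropy avg - (\<Sum>k<n. p k * vN_entropy (\<sigma> k))"

text \<open>Coherent information I_c(R>Q') = S(rho^Q') - S(rho^RQ'), where
  rho^RQ' = Tr_E[(I_R \<otimes> U)(|Psi><Psi| \<otimes> |e><e|)(I_R \<otimes> U)^dagger] and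
  rho^Q' = E^Q(rho^Q) with rho^Q = Tr_R |Psi><Psi|.\<close>
definition coh_info :: "nat \<Rightarrow> nat \<Rightarrow> nat \<Rightarrow> complex vec \<Rightarrow> complex mat \<Rightarrow> complex vec \<Rightarrow> real" where
  "coh_info dR d dE \<Psi> U e =
     vN_entropy (chan_out d dE U e (ptrace_first dR d (ket_bra \<Psi>)))
   - vN_entropy (ptrace_second (dR * d) dE
        (kron (1\<^sub>m dR) U * kron (ket_bra \<Psi>) (ket_bra e) * adj (kron (1\<^sub>m dR) U)))"

end

theory Submission
  imports Defs "Jordan_Normal_Form.Schur_Decomposition"
begin


lemma order_prod_linear:
  "Polynomial.order a (\<Prod>b\<leftarrow>as. [:- b, 1:]) = count_list as (a::complex)"
proof (induct as)
  case Nil then show ?case by simp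
next
  case (Cons b as)
  have "Polynomial.order a (\<Prod>b\<leftarrow>b#as. [:- b, 1:]) = Polynomial.order a ([:- b, 1:] * (\<Prod>b\<leftarrow>as. [:- b, 1:]))" by simp
  also have "\<dots> = Polynomial.order a [:- b, 1:] + Polynomial.order a (\<Prod>b\<leftarrow>as. [:- b, 1:])"
    by (rule order_mult, simp only: mult_eq_0_iff prod_list_zero_iff, auto)
  also have "Polynomial.order a [:- b, 1:] = (if a = b then 1 else 0)"
    using order_power_n_n[of a 1] order_0I[of "[:- b, 1:]" a] by auto
  finally show ?case using Cons by simp
qed

lemma sum_list_count_real:
  "sum_list (map (f :: 'a \<Rightarrow> real) xs) = (\<Sum>x\<in>set xs. real (count_list xs x) * f x)"
proof(induction xs)
  case (Cons x xs)
  show ?case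
  proof cases
    assume xin: "x \<in> set xs"
    have "sum_list (map f (x#xs)) = f x + (\<Sum>x\<in>set xs. real (count_list xs x) * f x)" by (simp add: Cons.IH)
    also have "set xs = insert x (set xs - {x})" using xin by blast
    also have "f x + (\<Sum>x\<in>insert x (set xs - {x}). real (count_list xs x) * f x) =
       (\<Sum>y\<in>set (x#xs). real (count_list (x#xs) y) * f y)"
      using xin by (auto simp add: sum.insert_remove algebra_simps insert_absorb sum.remove intro!: sum.cong split: if_splits)
    finally show ?thesis .
  next
    assume "x \<notin> set xs"
    hence "\<And>xa. xa \<in> set xs \<Longrightarrow> x \<noteq> xa" by blast
    thus ?thesis by (simp add: Cons.IH \<open>x \<notin> set xs\<close>)
  qed
qed simp

lemma roots_prod_linear:
  "{a. poly (\<Prod>b\<leftarrow>as. [:- b, 1:]) a = 0} = set (as::complex list)"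
  by (auto simp: poly_prod_list prod_list_zero_iff)

lemma vN_list:
  assumes "char_poly A = (\<Prod>b\<leftarrow>as. [:- b, 1:])"
  shows "vN_entropy A = (\<Sum>x\<leftarrow>as. eta (Re x))"
  unfolding vN_entropy_def assms roots_prod_linear order_prod_linear
  by (simp add: sum_list_count_real)

lemma mtrace_comm:
  assumes "X \<in> carrier_mat n m" "Y \<in> carrier_mat m n"
  shows "mtrace (X * Y) = mtrace (Y * X)"
proof -
  have "mtrace (X * Y) = (\<Sum>i<n. \<Sum>j<m. X $$ (i,j) * Y $$ (j,i))"
    using assms unfolding mtrace_def by (auto simp: scalar_prod_def intro!: sum.cong split: if_splits)
  also have "\<dots> = (\<Sum>j<m. \<Sum>i<n. Y $$ (j,i) * X $$ (i,j))"
    by (subst sum.swap) (simp add: mult.commute)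
  also have "\<dots> = mtrace (Y * X)"
    using assms unfolding mtrace_def by (auto simp: scalar_prod_def intro!: sum.cong split: if_splits)
  finally show ?thesis .
qed

lemma spectrum:
  fixes A :: "complex mat"
  assumes A: "A \<in> carrier_mat n n"
  shows "\<exists>as. length as = n \<and> char_poly A = (\<Prod>b\<leftarrow>as. [:- b, 1:]) \<and> sum_list as = mtrace A"
proof -
  obtain as where c: "char_poly A = (\<Prod>b\<leftarrow>as. [:- b, 1:])" and l: "length as = n"
    using char_poly_factorized[OF A] by blast
  obtain B P Q where sd: "schur_decomposition A as = (B,P,Q)" by (cases "schur_decomposition A as") auto
  from schur_decomposition[OF A c sd] have
    w: "similar_mat_wit A B P Q" and d: "diag_mat B = as" by auto
  from w A have B: "B \<in> carrier_mat n n" and P: "P \<in> carrier_mat n n" and Q: "Q \<in> carrier_mat n n"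
    and QP: "Q * P = 1\<^sub>m n" and eq: "A = P * B * Q"
    unfolding similar_mat_wit_def Let_def by auto
  have "mtrace A = mtrace (P * (B * Q))" using eq P B Q by (simp add: assoc_mult_mat)
  also have "\<dots> = mtrace ((B * Q) * P)" by (rule mtrace_comm[OF P], use B Q in auto)
  also have "(B * Q) * P = B" using B Q P QP by (simp add: assoc_mult_mat)
  also have "mtrace B = sum_list (diag_mat B)"
    using B unfolding mtrace_def diag_mat_def by (simp add: sum_list_sum_nth atLeast0LessThan)
  finally show ?thesis using c l d by auto
qed
lemma eig_re_nonneg:
  fixes M :: "complex mat"
  assumes M: "M \<in> carrier_mat n n"
    and psd: "\<forall>v\<in>carrier_vec n. 0 \<le> Re (conjugate v \<bullet> (M *\<^sub>v v))"
    and r: "poly (char_poly M) a = 0"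
  shows "0 \<le> Re a"
proof -
  have "eigenvalue M a" using eigenvalue_root_char_poly[OF M] r by simp
  then obtain v where v: "v \<in> carrier_vec n" "v \<noteq> 0\<^sub>v n" "M *\<^sub>v v = a \<cdot>\<^sub>v v"
    unfolding eigenvalue_def eigenvector_def using M by auto
  have pos: "conjugate v \<bullet> v > 0"
    using conjugate_square_greater_0_vec[OF v(1)] v(2) conjugate_vec_sprod_comm[OF v(1) v(1)] by simp
  have "conjugate v \<bullet> (M *\<^sub>v v) = a * (conjugate v \<bullet> v)"
    using v by simp
  with psd v(1) have "0 \<le> Re (a * (conjugate v \<bullet> v))" by auto
  moreover have "Im (conjugate v \<bullet> v) = 0" "Re (conjugate v \<bullet> v) > 0"
    using pos by (auto simp: less_complex_def)
  ultimately show ?thesis by (simp add: zero_le_mult_iff)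
qed

lemma eta_nonneg: "0 \<le> x \<Longrightarrow> x \<le> 1 \<Longrightarrow> 0 \<le> eta x"
  unfolding eta_def by (auto simp: mult_le_0_iff)

lemma eta_tangent:
  assumes "0 \<le> x" "(1::real) \<le> N"
  shows "eta x \<le> (x * ln N + 1 / N - x) / ln 2"
proof (cases "x = 0")
  case True then show ?thesis using assms by (simp add: eta_def)
next
  case False
  then have x: "x > 0" using assms by simp
  have N: "N > 0" using assms by simp
  have "ln (1 / (N * x)) \<le> 1 / (N * x) - 1" using x N by (intro ln_le_minus_one) auto
  then have "x * ln (1 / (N * x)) \<le> x * (1 / (N * x) - 1)" using x by (intro mult_left_mono) auto
  moreover have "ln (1 / (N * x)) = - ln N - ln x" using x N by (simp add: ln_div ln_mult)
  moreover have "x * (1 / (N * x) - 1) = 1 / N - x" using x N by (simp add: field_simps)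
  ultimately have "- x * ln x \<le> x * ln N + 1 / N - x" by (simp add: algebra_simps)
  then have "(- (x * ln x)) / ln 2 \<le> (x * ln N + 1 / N - x) / ln 2" by (intro divide_right_mono) auto
  then show ?thesis using x unfolding eta_def log_def by simp
qed

lemma sum_list_affine:
  "(\<Sum>y\<leftarrow>ys. (y * c + a - y) / (b::real)) = ((\<Sum>y\<leftarrow>ys. y) * c + real (length ys) * a - (\<Sum>y\<leftarrow>ys. y)) / b"
  by (induct ys) (simp_all add: add_divide_distrib diff_divide_distrib algebra_simps)

lemma entropy_list_bounds:
  fixes ys :: "real list"
  assumes nn: "\<forall>y\<in>set ys. 0 \<le> y" and s: "sum_list ys = 1"
  shows "0 \<le> (\<Sum>y\<leftarrow>ys. eta y)" and "(\<Sum>y\<leftarrow>ys. eta y) \<le> log 2 (real (length ys))"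
proof -
  have le1: "\<forall>y\<in>set ys. y \<le> 1"
    using member_le_sum_list[of _ ys] nn s
    by (metis member_le_sum_list sum_list_nonneg)
  show "0 \<le> (\<Sum>y\<leftarrow>ys. eta y)" using nn le1 by (intro sum_list_nonneg) (auto intro: eta_nonneg)
  have ne: "ys \<noteq> []" using s by auto
  define N where "N = real (length ys)"
  have N: "1 \<le> N" using ne unfolding N_def by (cases ys) auto
  have "(\<Sum>y\<leftarrow>ys. eta y) \<le> (\<Sum>y\<leftarrow>ys. (y * ln N + 1 / N - y) / ln 2)"
    using nn N by (intro sum_list_mono eta_tangent) auto
  also have "\<dots> = ((\<Sum>y\<leftarrow>ys. y) * ln N + N * (1 / N) - (\<Sum>y\<leftarrow>ys. y)) / ln 2"
    unfolding sum_list_affine N_def ..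
  also have "\<dots> = log 2 N" using N s by (simp add: log_def)
  finally show "(\<Sum>y\<leftarrow>ys. eta y) \<le> log 2 (real (length ys))" unfolding N_def .
qed


lemma sum_split: fixes g :: "nat \<Rightarrow> 'a::comm_monoid_add" shows "(\<Sum>i<a*b. g i) = (\<Sum>i<a. \<Sum>j<b. g (i*b+j))"
proof -
  have "(\<Sum>i<a*b. g i) = (\<Sum>i<a. sum g {i*b..<i*b+b})" using sum.nat_group[of g b a] by simp
  also have "\<dots> = (\<Sum>i<a. \<Sum>j<b. g (i*b+j))"
  proof (rule sum.cong[OF refl])
    fix i
    show "sum g {i*b..<i*b+b} = (\<Sum>j<b. g (i*b+j))" using sum.shift_bounds_nat_ivl[of g 0 "i*b" b] by (simp add: atLeast0LessThan add.commute)
  qed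
  finally show ?thesis .
qed

lemma quad_form:
  assumes "M \<in> carrier_mat n n" "v \<in> carrier_vec n"
  shows "conjugate v \<bullet> (M *\<^sub>v v) = (\<Sum>i<n. \<Sum>j<n. cnj (v$i) * M$$(i,j) * v$j)"
  using assms by (auto simp: scalar_prod_def sum_distrib_left mult.assoc atLeast0LessThan intro!: sum.cong)

lemma idx_lt: "a < (d::nat) \<Longrightarrow> b < dE \<Longrightarrow> a*dE+b < d*dE"
proof -
  assume "a < d" "b < dE"
  then have "a*dE+b < a*dE + dE" by simp
  also have "\<dots> = (a+1)*dE" by simp
  also have "\<dots> \<le> d*dE" using \<open>a < d\<close> by (intro mult_right_mono) auto
  finally show "a*dE+b < d*dE" .
qed

lemma kron_quad:
  fixes \<rho> :: "complex mat"
  assumes r: "\<rho> \<in> carrier_mat d d" and e: "e \<in> carrier_vec dE" and v: "v \<in> carrier_vec (d*dE)"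
  defines "w \<equiv> vec d (\<lambda>c. \<Sum>f<dE. cnj (e$f) * v$(c*dE+f))"
  shows "conjugate v \<bullet> (kron \<rho> (ket_bra e) *\<^sub>v v) = conjugate w \<bullet> (\<rho> *\<^sub>v w)"
proof -
  have K: "kron \<rho> (ket_bra e) \<in> carrier_mat (d*dE) (d*dE)" using r e by (simp add: kron_def ket_bra_def)
  have w: "w \<in> carrier_vec d" unfolding w_def by simp
  have idx: "\<And>a b. b < dE \<Longrightarrow> (a*dE+b) div dE = a \<and> (a*dE+b) mod dE = b" by auto
  have lt: "\<And>a b. a < d \<Longrightarrow> b < dE \<Longrightarrow> a*dE+b < d*dE"
  proof -
    fix a b assume "a < d" "b < dE"
    then have "a*dE+b < a*dE + dE" by simp
    also have "\<dots> = (a+1)*dE" by simp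
    also have "\<dots> \<le> d*dE" using \<open>a < d\<close> by (intro mult_right_mono) auto
    finally show "a*dE+b < d*dE" .
  qed
  have "conjugate v \<bullet> (kron \<rho> (ket_bra e) *\<^sub>v v) =
     (\<Sum>i<d*dE. \<Sum>j<d*dE. cnj (v$i) * kron \<rho> (ket_bra e)$$(i,j) * v$j)"
    by (rule quad_form[OF K v])
  also have "\<dots> = (\<Sum>a<d. \<Sum>b<dE. \<Sum>c<d. \<Sum>f<dE. cnj (v$(a*dE+b)) * (\<rho>$$(a,c) * (e$b * cnj (e$f))) * v$(c*dE+f))"
    unfolding sum_split
    using r e idx lt by (intro sum.cong refl) (simp add: kron_def ket_bra_def)
  also have "\<dots> = conjugate w \<bullet> (\<rho> *\<^sub>v w)"
    unfolding quad_form[OF r w] unfolding w_def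
    by (simp add: sum_distrib_left sum_distrib_right mult_ac) (rule sum.cong[OF refl], rule sum.swap)
  finally show ?thesis .
qed
lemma ptrace_quad:
  fixes M :: "complex mat"
  assumes M: "M \<in> carrier_mat (a*b) (a*b)" and v: "v \<in> carrier_vec a"
  shows "conjugate v \<bullet> (ptrace_second a b M *\<^sub>v v) =
    (\<Sum>k<b. conjugate (vec (a*b) (\<lambda>t. if t mod b = k then v$(t div b) else 0)) \<bullet>
       (M *\<^sub>v vec (a*b) (\<lambda>t. if t mod b = k then v$(t div b) else 0)))"
proof -
  have P: "ptrace_second a b M \<in> carrier_mat a a" by (simp add: ptrace_second_def)
  have idx: "\<And>x y. y < b \<Longrightarrow> (x*b+y) div b = x \<and> (x*b+y) mod b = y" by auto
  have "conjugate v \<bullet> (ptrace_second a b M *\<^sub>v v) = (\<Sum>i<a. \<Sum>j<a. cnj (v$i) * ptrace_second a b M $$(i,j) * v$j)"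
    by (rule quad_form[OF P v])
  also have "\<dots> = (\<Sum>k<b. \<Sum>i<a. \<Sum>j<a. cnj (v$i) * M $$ (i*b+k, j*b+k) * v$j)"
    by (simp add: ptrace_second_def sum_distrib_left sum_distrib_right sum.swap[of _ "{..<b}"])
  also have "\<dots> = (\<Sum>k<b. conjugate (vec (a*b) (\<lambda>t. if t mod b = k then v$(t div b) else 0)) \<bullet>
       (M *\<^sub>v vec (a*b) (\<lambda>t. if t mod b = k then v$(t div b) else 0)))"
  proof (rule sum.cong[OF refl])
    fix k assume k: "k \<in> {..<b}"
    let ?w = "vec (a*b) (\<lambda>t. if t mod b = k then v$(t div b) else 0)"
    have w: "?w \<in> carrier_vec (a*b)" by simp
    have "conjugate ?w \<bullet> (M *\<^sub>v ?w) = (\<Sum>s<a*b. \<Sum>t<a*b. cnj (?w$s) * M$$(s,t) * ?w$t)"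
      by (rule quad_form[OF M w])
    also have "\<dots> = (\<Sum>i<a. \<Sum>k1<b. \<Sum>j<a. \<Sum>k2<b. (if k1 = k then cnj (v$i) else 0) * M$$(i*b+k1,j*b+k2) * (if k2 = k then v$j else 0))"
      unfolding sum_split using idx idx_lt by (intro sum.cong refl) simp
    also have "\<dots> = (\<Sum>i<a. \<Sum>j<a. cnj (v$i) * M $$ (i*b+k, j*b+k) * v$j)"
    proof -
      have l1: "\<And>P x y. (if P then x else 0) * y = (if P then x * y else (0::complex))" by simp
      have r1: "\<And>P x y. x * (if P then y else 0) = (if P then x * y else (0::complex))" by simp
      have s1: "\<And>P (f::nat \<Rightarrow> complex) A. (\<Sum>j\<in>A. if P then f j else 0) = (if P then sum f A else 0)" by simp
      show ?thesis using k by (simp only: l1 r1 s1 sum.delta sum.delta' finite_lessThan lessThan_iff if_True)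
    qed
    finally show "(\<Sum>i<a. \<Sum>j<a. cnj (v$i) * M $$ (i*b+k, j*b+k) * v$j) = conjugate ?w \<bullet> (M *\<^sub>v ?w)" by simp
  qed
  finally show ?thesis .
qed
lemma adj_carrier: "U \<in> carrier_mat n m \<Longrightarrow> adj U \<in> carrier_mat m n"
  by (simp add: adj_def)

lemma adj_sprod:
  fixes U :: "complex mat"
  assumes U: "U \<in> carrier_mat n n" and v: "v \<in> carrier_vec n" and z: "z \<in> carrier_vec n"
  shows "conjugate v \<bullet> (U *\<^sub>v z) = conjugate (adj U *\<^sub>v v) \<bullet> z"
  using U v z
  by (simp add: scalar_prod_def adj_def sum_distrib_left sum_distrib_right mult_ac atLeast0LessThan)
     (rule sum.swap)

lemma unit_quad:
  fixes U X :: "complex mat"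
  assumes U: "U \<in> carrier_mat n n" and X: "X \<in> carrier_mat n n" and v: "v \<in> carrier_vec n"
  shows "conjugate v \<bullet> ((U * X * adj U) *\<^sub>v v) = conjugate (adj U *\<^sub>v v) \<bullet> (X *\<^sub>v (adj U *\<^sub>v v))"
proof -
  have A: "adj U \<in> carrier_mat n n" using adj_carrier[OF U] .
  have "(U * X * adj U) *\<^sub>v v = U *\<^sub>v (X *\<^sub>v (adj U *\<^sub>v v))"
  proof -
    have "(U * X * adj U) *\<^sub>v v = (U * X) *\<^sub>v (adj U *\<^sub>v v)" using U X A v by (intro assoc_mult_mat_vec) auto
    also have "\<dots> = U *\<^sub>v (X *\<^sub>v (adj U *\<^sub>v v))" using U X A v by (intro assoc_mult_mat_vec) auto
    finally show ?thesis .
  qed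
  then show ?thesis using adj_sprod[OF U v, of "X *\<^sub>v (adj U *\<^sub>v v)"] X A v by simp
qed

lemma mtrace_unit:
  fixes U X :: "complex mat"
  assumes U: "unitary_mat n U" and X: "X \<in> carrier_mat n n"
  shows "mtrace (U * X * adj U) = mtrace X"
proof -
  have Uc: "U \<in> carrier_mat n n" and UU: "adj U * U = 1\<^sub>m n" using U unfolding unitary_mat_def by auto
  have A: "adj U \<in> carrier_mat n n" using adj_carrier[OF Uc] .
  have "mtrace ((U * X) * adj U) = mtrace (adj U * (U * X))" using Uc X A by (intro mtrace_comm) auto
  also have "adj U * (U * X) = (adj U * U) * X" using Uc X A by (simp add: assoc_mult_mat)
  finally show ?thesis using UU X by simp
qed

lemma mtrace_ptrace:
  fixes M :: "complex mat"
  assumes "M \<in> carrier_mat (a*b) (a*b)"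
  shows "mtrace (ptrace_second a b M) = mtrace M"
  using assms by (simp add: mtrace_def ptrace_second_def sum_split)

lemma mtrace_kron:
  fixes \<rho> :: "complex mat"
  assumes r: "\<rho> \<in> carrier_mat d d" and e: "e \<in> carrier_vec dE"
  shows "mtrace (kron \<rho> (ket_bra e)) = mtrace \<rho> * (\<Sum>b<dE. e$b * cnj (e$b))"
  using r e idx_lt by (simp add: mtrace_def kron_def ket_bra_def sum_split sum_distrib_left sum_distrib_right mult_ac) (rule sum.swap)


definition rpsd :: "nat \<Rightarrow> complex mat \<Rightarrow> bool" where
  "rpsd n M \<longleftrightarrow> M \<in> carrier_mat n n \<and> (\<forall>v\<in>carrier_vec n. 0 \<le> Re (conjugate v \<bullet> (M *\<^sub>v v))) \<and> Re (mtrace M) = 1"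

lemma Re_sum_list: "Re (sum_list xs) = sum_list (map Re xs)"
  by (induct xs) auto

lemma rpsd_entropy:
  assumes "rpsd n M"
  shows "0 \<le> vN_entropy M" "vN_entropy M \<le> log 2 (real n)"
proof -
  have M: "M \<in> carrier_mat n n" and psd: "\<forall>v\<in>carrier_vec n. 0 \<le> Re (conjugate v \<bullet> (M *\<^sub>v v))"
    and tr: "Re (mtrace M) = 1" using assms unfolding rpsd_def by auto
  obtain as where l: "length as = n" and c: "char_poly M = (\<Prod>b\<leftarrow>as. [:- b, 1:])" and s: "sum_list as = mtrace M"
    using spectrum[OF M] by blast
  have vN: "vN_entropy M = (\<Sum>y\<leftarrow>map Re as. eta y)" using vN_list[OF c] by (simp add: o_def)
  have nn: "\<forall>y\<in>set (map Re as). 0 \<le> y"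
  proof
    fix y assume "y \<in> set (map Re as)"
    then obtain a where a: "a \<in> set as" "y = Re a" by auto
    have "poly (char_poly M) a = 0" using a(1) c roots_prod_linear by auto
    then show "0 \<le> y" using eig_re_nonneg[OF M psd] a(2) by auto
  qed
  have ss: "sum_list (map Re as) = 1" using s tr Re_sum_list by metis
  show "0 \<le> vN_entropy M" using entropy_list_bounds(1)[OF nn ss] vN by simp
  show "vN_entropy M \<le> log 2 (real n)" using entropy_list_bounds(2)[OF nn ss] vN l by simp
qed

lemma rpsd_chan:
  assumes r: "rpsd d \<rho>" and e: "pure_vec dE e" and U: "unitary_mat (d*dE) U"
  shows "rpsd d (chan_out d dE U e \<rho>)"
proof -
  have rc: "\<rho> \<in> carrier_mat d d" and psd: "\<forall>v\<in>carrier_vec d. 0 \<le> Re (conjugate v \<bullet> (\<rho> *\<^sub>v v))"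
    and tr: "Re (mtrace \<rho>) = 1" using r unfolding rpsd_def by auto
  have ec: "e \<in> carrier_vec dE" and en: "(\<Sum>i<dE. (cmod (e $ i))\<^sup>2) = 1" using e unfolding pure_vec_def by auto
  have Uc: "U \<in> carrier_mat (d*dE) (d*dE)" using U unfolding unitary_mat_def by auto
  define X where "X = kron \<rho> (ket_bra e)"
  have Xc: "X \<in> carrier_mat (d*dE) (d*dE)" using rc ec by (simp add: X_def kron_def ket_bra_def)
  define Y where "Y = U * X * adj U"
  have Yc: "Y \<in> carrier_mat (d*dE) (d*dE)" using Uc Xc adj_carrier[OF Uc] by (simp add: Y_def)
  have co: "chan_out d dE U e \<rho> = ptrace_second d dE Y"
    by (simp add: chan_out_def dilate_def Y_def X_def)
  have Xpsd: "0 \<le> Re (conjugate u \<bullet> (X *\<^sub>v u))" if u: "u \<in> carrier_vec (d*dE)" for u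
    unfolding X_def kron_quad[OF rc ec u] using psd by simp
  have Ypsd: "0 \<le> Re (conjugate u \<bullet> (Y *\<^sub>v u))" if u: "u \<in> carrier_vec (d*dE)" for u
    unfolding Y_def unit_quad[OF Uc Xc u] using Xpsd adj_carrier[OF Uc] u by simp
  have "0 \<le> Re (conjugate v \<bullet> (ptrace_second d dE Y *\<^sub>v v))" if v: "v \<in> carrier_vec d" for v
    unfolding ptrace_quad[OF Yc v] Re_sum by (intro sum_nonneg Ypsd) simp
  moreover have "ptrace_second d dE Y \<in> carrier_mat d d" by (simp add: ptrace_second_def)
  moreover have "Re (mtrace (ptrace_second d dE Y)) = 1"
  proof -
    have "(\<Sum>b<dE. e$b * cnj (e$b)) = complex_of_real (\<Sum>b<dE. (cmod (e$b))\<^sup>2)"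
      by (simp only: of_real_sum complex_norm_square)
    then have "(\<Sum>b<dE. e$b * cnj (e$b)) = 1" using en by simp
    then show ?thesis
      using mtrace_ptrace[OF Yc] mtrace_unit[OF U Xc] mtrace_kron[OF rc ec] tr
      unfolding Y_def X_def by simp
  qed
  ultimately show ?thesis unfolding co rpsd_def by auto
qed

lemma rpsd_ens:
  assumes st: "\<forall>k<n. rpsd d (\<rho> k)" and p: "\<forall>k<n. 0 \<le> p k" and ps: "(\<Sum>k<n. p k) = 1"
  shows "rpsd d (ens_avg d n p \<rho>)"
proof -
  have E: "ens_avg d n p \<rho> \<in> carrier_mat d d" by (simp add: ens_avg_def)
  have "0 \<le> Re (conjugate v \<bullet> (ens_avg d n p \<rho> *\<^sub>v v))" if v: "v \<in> carrier_vec d" for v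
  proof -
    have "conjugate v \<bullet> (ens_avg d n p \<rho> *\<^sub>v v) = (\<Sum>k<n. complex_of_real (p k) * (conjugate v \<bullet> (\<rho> k *\<^sub>v v)))"
    proof -
      have "conjugate v \<bullet> (ens_avg d n p \<rho> *\<^sub>v v) = (\<Sum>i<d. \<Sum>j<d. cnj (v$i) * ens_avg d n p \<rho> $$ (i,j) * v$j)"
        by (rule quad_form[OF E v])
      also have "\<dots> = (\<Sum>k<n. complex_of_real (p k) * (\<Sum>i<d. \<Sum>j<d. cnj (v$i) * \<rho> k $$ (i,j) * v$j))"
        by (simp add: ens_avg_def sum_distrib_left sum_distrib_right mult_ac sum.swap[of _ "{..<n}"])
      also have "\<dots> = (\<Sum>k<n. complex_of_real (p k) * (conjugate v \<bullet> (\<rho> k *\<^sub>v v)))"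
      proof (rule sum.cong[OF refl])
        fix k assume "k \<in> {..<n}"
        then have "\<rho> k \<in> carrier_mat d d" using st by (simp add: rpsd_def)
        then show "complex_of_real (p k) * (\<Sum>i<d. \<Sum>j<d. cnj (v$i) * \<rho> k $$ (i,j) * v$j) =
          complex_of_real (p k) * (conjugate v \<bullet> (\<rho> k *\<^sub>v v))" using quad_form[of "\<rho> k" d v] v by simp
      qed
      finally show ?thesis .
    qed
    moreover have "0 \<le> (\<Sum>k<n. p k * Re (conjugate v \<bullet> (\<rho> k *\<^sub>v v)))"
      using st p v by (intro sum_nonneg mult_nonneg_nonneg) (auto simp: rpsd_def)
    ultimately show ?thesis by (simp add: Re_sum)
  qed
  moreover have "Re (mtrace (ens_avg d n p \<rho>)) = 1"
  proof -
    have "mtrace (ens_avg d n p \<rho>) = (\<Sum>k<n. complex_of_real (p k) * mtrace (\<rho> k))"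
      using st by (simp add: mtrace_def ens_avg_def sum_distrib_left rpsd_def sum.swap[of _ "{..<n}"] del: Re_sum) (intro sum.cong refl, auto)
    then have "Re (mtrace (ens_avg d n p \<rho>)) = (\<Sum>k<n. p k * Re (mtrace (\<rho> k)))" by (simp add: Re_sum)
    also have "\<dots> = (\<Sum>k<n. p k)" using st by (intro sum.cong refl) (simp add: rpsd_def)
    finally show ?thesis using ps by simp
  qed
  ultimately show ?thesis using E unfolding rpsd_def by auto
qed


theorem mainTheorem1:
  fixes dR d dE n :: nat
    and \<Psi> e :: "complex vec" and U :: "complex mat"
    and p :: "nat \<Rightarrow> real" and \<rho> :: "nat \<Rightarrow> complex mat"
    and H_Eve :: real
  assumes pure_RQ: "pure_vec (dR * d) \<Psi>"
    and pure_E: "pure_vec dE e"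
    and unitary: "unitary_mat (d * dE) U"
    and p_nonneg: "\<forall>k<n. 0 \<le> p k"
    and p_sum: "(\<Sum>k<n. p k) = 1"
    and states: "\<forall>k<n. density_mat d (\<rho> k)"
    and ensemble: "ens_avg d n p \<rho> = ptrace_first dR d (ket_bra \<Psi>)"
    and convention: "coh_info dR d dE \<Psi> U e =
        holevo n p (\<lambda>k. chan_out d dE U e (\<rho> k)) (chan_out d dE U e (ptrace_first dR d (ket_bra \<Psi>)))
      - holevo n p (\<lambda>k. env_out d dE U e (\<rho> k)) (env_out d dE U e (ptrace_first dR d (ket_bra \<Psi>)))"
    and eve: "H_Eve \<le> holevo n p (\<lambda>k. env_out d dE U e (\<rho> k)) (env_out d dE U e (ptrace_first dR d (ket_bra \<Psi>)))"
  shows "coh_info dR d dE \<Psi> U e + H_Eve \<le> log 2 (real d)"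
proof -
  have st: "\<forall>k<n. rpsd d (\<rho> k)" using states unfolding density_mat_def rpsd_def by auto
  have rQ: "rpsd d (ptrace_first dR d (ket_bra \<Psi>))" using rpsd_ens[OF st p_nonneg p_sum] ensemble by simp
  have up: "vN_entropy (chan_out d dE U e (ptrace_first dR d (ket_bra \<Psi>))) \<le> log 2 (real d)"
    by (rule rpsd_entropy(2)[OF rpsd_chan[OF rQ pure_E unitary]])
  have "0 \<le> (\<Sum>k<n. p k * vN_entropy (chan_out d dE U e (\<rho> k)))"
    using st p_nonneg rpsd_entropy(1)[OF rpsd_chan[OF _ pure_E unitary]]
    by (intro sum_nonneg mult_nonneg_nonneg) auto
  then have "holevo n p (\<lambda>k. chan_out d dE U e (\<rho> k)) (chan_out d dE U e (ptrace_first dR d (ket_bra \<Psi>))) \<le> log 2 (real d)"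
    using up unfolding holevo_def by linarith
  then show ?thesis using convention eve by linarith
qed

end
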